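(* There exists $N$ such that for every integer $n\ge N$, the quantity $$S_n=\sum_{c=2}^{\lfloor n/2\rfloor}\binom{n}{c}(2^c-1)^{n-c}+\sum_{c=\lfloor n/2\rfloor+1}^{n-2}\binom{n}{c}(2^{n-c}-1)^{c}$$ satisfies $H_n\le S_n\le\big(1+(3/2)^{-n/3}\big)H_n$, where $H_n$ is the number of labeled split graphs with vertex set $[n]$ whose questioning set is empty.
   Context: $[n]=\{1,\dots,n\}$; labeled graphs on $[n]$ are distinct if their edge sets differ. A split partition of a graph $G$ is an ordered pair $(C',I')$ of disjoint sets (possibly empty) with $C'\cup I'=V(G)$, $C'$ a clique and $I'$ an independent set; $G$ is a split graph if it has a split partition. The questioning set of a split graph is the set of vertices $v$ for which there is a split partition with $v\in C'$ and a split partition with $v\in I'$. *)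

theory Defs
  imports Complex_Main
begin

text \<open>Labeled simple graphs on [n] = {1..n}, identified with their edge sets:
  sets of 2-element subsets of {1..n}.\<close>

definition all_edges :: "nat \<Rightarrow> nat set set" where
  "all_edges n = {e. e \<subseteq> {1..n} \<and> card e = 2}"

definition is_clique :: "nat set set \<Rightarrow> nat set \<Rightarrow> bool" where
  "is_clique E C \<longleftrightarrow> (\<forall>u\<in>C. \<forall>v\<in>C. u \<noteq> v \<longrightarrow> {u, v} \<in> E)"

definition is_indep :: "nat set set \<Rightarrow> nat set \<Rightarrow> bool" where
  "is_indep E I \<longleftrightarrow> (\<forall>u\<in>I. \<forall>v\<in>I. u \<noteq> v \<longrightarrow> {u, v} \<notin> E)"

definition split_partition :: "nat \<Rightarrow> nat set set \<Rightarrow> nat set \<Rightarrow> nat set \<Rightarrow> bool" where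
  "split_partition n E C I \<longleftrightarrow>
     C \<inter> I = {} \<and> C \<union> I = {1..n} \<and> is_clique E C \<and> is_indep E I"

definition is_split_graph :: "nat \<Rightarrow> nat set set \<Rightarrow> bool" where
  "is_split_graph n E \<longleftrightarrow> (\<exists>C I. split_partition n E C I)"

definition questioning_set :: "nat \<Rightarrow> nat set set \<Rightarrow> nat set" where
  "questioning_set n E = {v. (\<exists>C I. split_partition n E C I \<and> v \<in> C) \<and>
                            (\<exists>C I. split_partition n E C I \<and> v \<in> I)}"

definition H :: "nat \<Rightarrow> nat" where
  "H n = card {E. E \<subseteq> all_edges n \<and> is_split_graph n E \<and> questioning_set n E = {}}"

definition S :: "nat \<Rightarrow> nat" where
  "S n = (\<Sum>c = 2..n div 2. (n choose c) * (2 ^ c - 1) ^ (n - c))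
       + (\<Sum>c = n div 2 + 1..n - 2. (n choose c) * (2 ^ (n - c) - 1) ^ c)"

end

theory Submission
  imports Defs "HOL-Library.FuncSet"
begin


definition PP :: "nat \<Rightarrow> nat set \<Rightarrow> nat set set set" where
  "PP n C = {E. E \<subseteq> all_edges n \<and> split_partition n E C ({1..n} - C)}"

definition cA :: "nat \<Rightarrow> nat set \<Rightarrow> nat set set \<Rightarrow> bool" where
  "cA n C E \<longleftrightarrow> (\<forall>v\<in>{1..n} - C. \<exists>u\<in>C. {u,v} \<notin> E)"

definition cB :: "nat \<Rightarrow> nat set \<Rightarrow> nat set set \<Rightarrow> bool" where
  "cB n C E \<longleftrightarrow> (\<forall>u\<in>C. \<exists>v\<in>{1..n} - C. {u,v} \<in> E)"

definition GG :: "nat \<Rightarrow> nat set \<Rightarrow> nat set set set" where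
  "GG n C = {E \<in> PP n C. cA n C E \<and> cB n C E}"

definition CC :: "nat \<Rightarrow> nat set set" where
  "CC n = {C. C \<subseteq> {1..n} \<and> 2 \<le> card C \<and> card C \<le> n - 2}"

lemma split_I: "split_partition n E C I \<Longrightarrow> I = {1..n} - C \<and> C \<subseteq> {1..n}"
  unfolding split_partition_def by blast

lemma edge_in_all: "{a,b} \<in> all_edges n \<longleftrightarrow> a \<noteq> b \<and> a \<in> {1..n} \<and> b \<in> {1..n}"
  unfolding all_edges_def by (cases "a = b") auto

lemma all_edges_elem: "e \<in> all_edges n \<Longrightarrow> \<exists>a b. e = {a,b} \<and> a \<noteq> b \<and> a \<in> {1..n} \<and> b \<in> {1..n}"
  unfolding all_edges_def card_2_iff by blast

lemma finite_all_edges: "finite (all_edges n)"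
  unfolding all_edges_def by (rule finite_subset[where B="Pow {1..n}"]) auto

lemma finite_PP: "finite (PP n C)"
  unfolding PP_def by (rule finite_subset[where B="Pow (all_edges n)"]) (auto simp: finite_all_edges)

lemma finite_GG: "finite (GG n C)"
  unfolding GG_def using finite_PP by auto

lemma uniq:
  assumes sp: "split_partition n E C I" and a: "cA n C E" and b: "cB n C E"
    and sp': "split_partition n E C' I'"
  shows "C' = C"
proof -
  have I: "I = {1..n} - C" "C \<subseteq> {1..n}" using split_I[OF sp] by auto
  have I': "I' = {1..n} - C'" "C' \<subseteq> {1..n}" using split_I[OF sp'] by auto
  have cl: "is_clique E C" "is_indep E I" "is_clique E C'" "is_indep E I'"
    using sp sp' unfolding split_partition_def by auto
  have sub: "C' \<subseteq> C"
  proof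
    fix v assume v: "v \<in> C'"
    show "v \<in> C"
    proof (rule ccontr)
      assume "v \<notin> C"
      with v I I' have vI: "v \<in> {1..n} - C" by auto
      from a vI obtain u where u: "u \<in> C" "{u,v} \<notin> E" unfolding cA_def by blast
      have uv: "u \<noteq> v" using u vI by auto
      have "u \<notin> C'" using cl(3) v u uv unfolding is_clique_def by auto
      hence uI': "u \<in> I'" using u I I' by auto
      from b u obtain w where w: "w \<in> {1..n} - C" "{u,w} \<in> E" unfolding cB_def by blast
      have wv: "w \<noteq> v" using w u by auto
      have uw: "u \<noteq> w" using w u by auto
      have "w \<notin> I'" using cl(4) uI' w uw unfolding is_indep_def by auto
      hence wC': "w \<in> C'" using w I' by auto
      have "{v,w} \<in> E" using cl(3) v wC' wv unfolding is_clique_def by auto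
      moreover have "{v,w} \<notin> E" using cl(2) vI w wv I unfolding is_indep_def by auto
      ultimately show False by simp
    qed
  qed
  moreover have "C \<subseteq> C'"
  proof
    fix u assume u: "u \<in> C"
    show "u \<in> C'"
    proof (rule ccontr)
      assume "u \<notin> C'"
      hence uI': "u \<in> I'" using u I I' by auto
      from b u obtain w where w: "w \<in> {1..n} - C" "{u,w} \<in> E" unfolding cB_def by blast
      have uw: "u \<noteq> w" using w u by auto
      have "w \<notin> I'" using cl(4) uI' w uw unfolding is_indep_def by auto
      hence "w \<in> C'" using w I' by auto
      with sub w show False by auto
    qed
  qed
  ultimately show ?thesis by auto
qed

lemma GG_card:
  assumes E: "E \<in> GG n C" and n: "n \<ge> 1"
  shows "2 \<le> card C \<and> card C \<le> n - 2"
proof -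
  have sp: "split_partition n E C ({1..n} - C)" and a: "cA n C E" and b: "cB n C E"
    using E unfolding GG_def PP_def by auto
  have Cn: "C \<subseteq> {1..n}" using split_I[OF sp] by auto
  have fC: "finite C" using Cn finite_subset by blast
  obtain u0 where u0: "u0 \<in> C"
  proof (cases "1 \<in> C")
    case True then show ?thesis using that by blast
  next
    case False
    hence "1 \<in> {1..n} - C" using n by auto
    then show ?thesis using a that unfolding cA_def by blast
  qed
  from b u0 obtain w1 where w1: "w1 \<in> {1..n} - C" "{u0,w1} \<in> E" unfolding cB_def by blast
  from a w1(1) obtain u1 where u1: "u1 \<in> C" "{u1,w1} \<notin> E" unfolding cA_def by blast
  from b u1(1) obtain w2 where w2: "w2 \<in> {1..n} - C" "{u1,w2} \<in> E" unfolding cB_def by blast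
  have d1: "u0 \<noteq> u1" using w1 u1 by auto
  have d2: "w1 \<noteq> w2" using u1 w2 by auto
  have c1: "2 \<le> card C"
  proof -
    have "card {u0,u1} = 2" using d1 by simp
    moreover have "card {u0,u1} \<le> card C" using u0 u1 fC by (intro card_mono) auto
    ultimately show ?thesis by simp
  qed
  have c2: "2 \<le> card ({1..n} - C)"
  proof -
    have "card {w1,w2} = 2" using d2 by simp
    moreover have "card {w1,w2} \<le> card ({1..n} - C)" using w1 w2 by (intro card_mono) auto
    ultimately show ?thesis by simp
  qed
  have "card ({1..n} - C) = n - card C" using Cn by (simp add: card_Diff_subset fC)
  with c1 c2 show ?thesis by simp
qed

lemma GG_disj: "E \<in> GG n C \<Longrightarrow> E \<in> GG n C' \<Longrightarrow> C = C'"
  unfolding GG_def PP_def using uniq by blast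

lemma Hset_eq:
  assumes n: "n \<ge> 1"
  shows "{E. E \<subseteq> all_edges n \<and> is_split_graph n E \<and> questioning_set n E = {}} = (\<Union>C\<in>CC n. GG n C)"
proof (intro equalityI subsetI)
  fix E assume "E \<in> {E. E \<subseteq> all_edges n \<and> is_split_graph n E \<and> questioning_set n E = {}}"
  hence Ea: "E \<subseteq> all_edges n" and sg: "is_split_graph n E" and q: "questioning_set n E = {}" by auto
  from sg obtain C I where sp: "split_partition n E C I" unfolding is_split_graph_def by auto
  have I: "I = {1..n} - C" "C \<subseteq> {1..n}" using split_I[OF sp] by auto
  have a: "cA n C E"
    unfolding cA_def
  proof (rule ballI, rule ccontr)
    fix v assume v: "v \<in> {1..n} - C" and "\<not> (\<exists>u\<in>C. {u, v} \<notin> E)"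
    hence adj: "\<forall>u\<in>C. {u,v} \<in> E" "\<forall>u\<in>C. {v,u} \<in> E" by (auto simp: insert_commute)
    have "split_partition n E (insert v C) (I - {v})"
      using sp adj v I unfolding split_partition_def is_clique_def is_indep_def
      by blast
    hence "v \<in> questioning_set n E" using sp v I unfolding questioning_set_def by blast
    with q show False by auto
  qed
  have b: "cB n C E"
    unfolding cB_def
  proof (rule ballI, rule ccontr)
    fix u assume u: "u \<in> C" and "\<not> (\<exists>v\<in>{1..n} - C. {u, v} \<in> E)"
    hence adj: "\<forall>v\<in>I. {u,v} \<notin> E" "\<forall>v\<in>I. {v,u} \<notin> E" using I by (auto simp: insert_commute)
    have "split_partition n E (C - {u}) (insert u I)"
      using sp adj u I unfolding split_partition_def is_clique_def is_indep_def
      by blast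
    hence "u \<in> questioning_set n E" using sp u I unfolding questioning_set_def by blast
    with q show False by auto
  qed
  have EG: "E \<in> GG n C" using Ea sp a b I unfolding GG_def PP_def by auto
  moreover have "C \<in> CC n" using GG_card[OF EG n] I unfolding CC_def by auto
  ultimately show "E \<in> (\<Union>C\<in>CC n. GG n C)" by blast
next
  fix E assume "E \<in> (\<Union>C\<in>CC n. GG n C)"
  then obtain C where E: "E \<in> GG n C" by auto
  hence sp: "split_partition n E C ({1..n} - C)" and a: "cA n C E" and b: "cB n C E"
    and Ea: "E \<subseteq> all_edges n"
    unfolding GG_def PP_def by auto
  have "questioning_set n E = {}"
  proof (rule ccontr)
    assume "questioning_set n E \<noteq> {}"
    then obtain w C1 I1 C2 I2 where s1: "split_partition n E C1 I1" "w \<in> C1"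
      and s2: "split_partition n E C2 I2" "w \<in> I2"
      unfolding questioning_set_def by blast
    have "C1 = C" using uniq[OF sp a b s1(1)] .
    moreover have "C2 = C" using uniq[OF sp a b s2(1)] .
    moreover have "I2 = {1..n} - C2" using split_I[OF s2(1)] by auto
    ultimately show False using s1 s2 by auto
  qed
  thus "E \<in> {E. E \<subseteq> all_edges n \<and> is_split_graph n E \<and> questioning_set n E = {}}"
    using Ea sp unfolding is_split_graph_def by auto
qed


lemma PP_ext_sub:
  assumes E: "E \<in> PP n C" and E': "E' \<in> PP n C"
    and h: "\<And>x y. x \<in> C \<Longrightarrow> y \<in> {1..n} - C \<Longrightarrow> {x,y} \<in> E \<Longrightarrow> {x,y} \<in> E'"
  shows "E \<subseteq> E'"
proof
  fix e assume e: "e \<in> E"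
  have sp: "split_partition n E C ({1..n} - C)" "split_partition n E' C ({1..n} - C)" and Ea: "E \<subseteq> all_edges n"
    using E E' unfolding PP_def by auto
  obtain a b where ab: "e = {a,b}" "a \<noteq> b" "a \<in> {1..n}" "b \<in> {1..n}"
    using all_edges_elem[of e n] e Ea by blast
  show "e \<in> E'"
  proof (cases "a \<in> C")
    case aC: True
    show ?thesis
    proof (cases "b \<in> C")
      case True thus ?thesis using sp(2) aC ab unfolding split_partition_def is_clique_def by auto
    next
      case False thus ?thesis using h[of a b] aC ab e by auto
    qed
  next
    case aC: False
    show ?thesis
    proof (cases "b \<in> C")
      case True thus ?thesis using h[of b a] aC ab e by (auto simp: insert_commute)
    next
      case False thus ?thesis using sp(1) aC ab e unfolding split_partition_def is_indep_def by auto
    qed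
  qed
qed

lemma PP_ext:
  assumes "E \<in> PP n C" "E' \<in> PP n C"
    and "\<And>x y. x \<in> C \<Longrightarrow> y \<in> {1..n} - C \<Longrightarrow> {x,y} \<in> E \<longleftrightarrow> {x,y} \<in> E'"
  shows "E = E'"
proof (rule equalityI)
  show "E \<subseteq> E'" by (rule PP_ext_sub[OF assms(1,2)]) (use assms(3) in blast)
  show "E' \<subseteq> E" by (rule PP_ext_sub[OF assms(2,1)]) (use assms(3) in blast)
qed

definition nb :: "nat set \<Rightarrow> nat set \<Rightarrow> nat set set \<Rightarrow> nat \<Rightarrow> nat set" where
  "nb X Y E = (\<lambda>x\<in>X. {y\<in>Y. {x,y} \<in> E})"

lemma bij_nb:
  assumes C: "C \<subseteq> {1..n}"
    and XY: "(X = C \<and> Y = {1..n} - C) \<or> (X = {1..n} - C \<and> Y = C)"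
  shows "bij_betw (nb X Y) (PP n C) (\<Pi>\<^sub>E x\<in>X. Pow Y)"
proof -
  have d: "X \<inter> Y = {}" "X \<union> Y = {1..n}" using XY C by auto
  have cross: "\<And>x y. x \<in> X \<Longrightarrow> y \<in> Y \<Longrightarrow> (x \<in> C \<and> y \<notin> C) \<or> (y \<in> C \<and> x \<notin> C)"
    using XY by auto
  show ?thesis
  proof (rule bij_betwI')
    fix E1 E2 assume E1: "E1 \<in> PP n C" and E2: "E2 \<in> PP n C"
    show "(nb X Y E1 = nb X Y E2) = (E1 = E2)"
    proof
      assume eq: "nb X Y E1 = nb X Y E2"
      have key: "\<And>x y. x \<in> X \<Longrightarrow> y \<in> Y \<Longrightarrow> {x,y} \<in> E1 \<longleftrightarrow> {x,y} \<in> E2"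
      proof -
        fix x y assume xy: "x \<in> X" "y \<in> Y"
        have "{y\<in>Y. {x,y} \<in> E1} = {y\<in>Y. {x,y} \<in> E2}"
          using fun_cong[OF eq, of x] xy(1) by (simp add: nb_def)
        thus "{x,y} \<in> E1 \<longleftrightarrow> {x,y} \<in> E2" using xy(2) by blast
      qed
      show "E1 = E2"
      proof (rule PP_ext[OF E1 E2])
        fix x y assume xy: "x \<in> C" "y \<in> {1..n} - C"
        show "{x,y} \<in> E1 \<longleftrightarrow> {x,y} \<in> E2"
          using XY
        proof
          assume "X = C \<and> Y = {1..n} - C" thus ?thesis using key xy by auto
        next
          assume "X = {1..n} - C \<and> Y = C" thus ?thesis using key[of y x] xy by (auto simp: insert_commute)
        qed
      qed
    qed simp
  next
    fix E assume "E \<in> PP n C"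
    show "nb X Y E \<in> (\<Pi>\<^sub>E x\<in>X. Pow Y)" by (auto simp: nb_def)
  next
    fix f assume f: "f \<in> (\<Pi>\<^sub>E x\<in>X. Pow Y)"
    define E where "E = {{a,b}| a b. a \<in> C \<and> b \<in> C \<and> a \<noteq> b} \<union> {{x,y}| x y. x \<in> X \<and> y \<in> f x}"
    have fY: "\<And>x. x \<in> X \<Longrightarrow> f x \<subseteq> Y" using f by auto
    have fext: "\<And>x. x \<notin> X \<Longrightarrow> f x = undefined" using f by (auto simp: PiE_def extensional_def)
    have Ea: "E \<subseteq> all_edges n"
    proof
      fix e assume "e \<in> E"
      then consider (k) a b where "e = {a,b}" "a \<in> C" "b \<in> C" "a \<noteq> b"
        | (c) x y where "e = {x,y}" "x \<in> X" "y \<in> f x"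
        unfolding E_def by blast
      then show "e \<in> all_edges n"
      proof cases
        case k thus ?thesis using C by (auto simp: edge_in_all)
      next
        case c
        hence "y \<in> Y" using fY by auto
        thus ?thesis using c d by (auto simp: edge_in_all)
      qed
    qed
    have sp: "split_partition n E C ({1..n} - C)"
      unfolding split_partition_def is_clique_def is_indep_def
    proof (intro conjI ballI impI)
      show "C \<inter> ({1..n} - C) = {}" by auto
      show "C \<union> ({1..n} - C) = {1..n}" using C by auto
      fix u v assume "u \<in> C" "v \<in> C" "u \<noteq> v"
      thus "{u,v} \<in> E" unfolding E_def by blast
    next
      fix u v assume uv: "u \<in> {1..n} - C" "v \<in> {1..n} - C" "u \<noteq> v"
      show "{u,v} \<notin> E"
      proof
        assume "{u,v} \<in> E"
        then consider (k) a b where "{u,v} = {a,b}" "a \<in> C" "b \<in> C"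
          | (c) x y where "{u,v} = {x,y}" "x \<in> X" "y \<in> f x"
          unfolding E_def by blast
        then show False
        proof cases
          case k thus False using uv by (auto simp: doubleton_eq_iff)
        next
          case c
          hence "y \<in> Y" using fY by auto
          from cross[OF c(2) this] c(1) uv show False by (auto simp: doubleton_eq_iff)
        qed
      qed
    qed
    have EP: "E \<in> PP n C" using Ea sp unfolding PP_def by auto
    have "f = nb X Y E"
    proof
      fix x
      show "f x = nb X Y E x"
      proof (cases "x \<in> X")
        case False thus ?thesis using fext by (simp add: nb_def)
      next
        case xX: True
        have "{y\<in>Y. {x,y}\<in>E} = f x"
        proof (intro equalityI subsetI)
          fix y assume "y \<in> {y\<in>Y. {x,y}\<in>E}"
          hence y: "y\<in>Y" "{x,y}\<in>E" by auto
          then consider (k) a b where "{x,y}={a,b}" "a\<in>C" "b\<in>C"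
            | (c) x' y' where "{x,y}={x',y'}" "x'\<in>X" "y'\<in>f x'"
            unfolding E_def by blast
          then show "y \<in> f x"
          proof cases
            case k then have "x\<in>C" "y\<in>C" by (auto simp: doubleton_eq_iff)
            with cross[OF xX y(1)] show ?thesis by auto
          next
            case c
            then have "(x = x' \<and> y = y') \<or> (x = y' \<and> y = x')" by (simp add: doubleton_eq_iff)
            thus ?thesis using fY c xX d by auto
          qed
        next
          fix y assume "y \<in> f x" thus "y \<in> {y\<in>Y. {x,y}\<in>E}" using fY xX unfolding E_def by blast
        qed
        thus ?thesis using xX by (simp add: nb_def)
      qed
    qed
    thus "\<exists>E\<in>PP n C. f = nb X Y E" using EP by blast
  qed
qed

lemma card_sub_bij:
  assumes "bij_betw h A B"
  shows "card {a\<in>A. Q (h a)} = card {b\<in>B. Q b}"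
proof -
  have "bij_betw h {a\<in>A. Q (h a)} {b\<in>B. Q b}"
    using assms unfolding bij_betw_def inj_on_def by (auto simp: image_iff)
  thus ?thesis by (rule bij_betw_same_card)
qed



lemma cardA1:
  assumes C: "C \<subseteq> {1..n}"
  shows "card {E\<in>PP n C. cA n C E} = (2 ^ card C - 1) ^ (n - card C)"
proof -
  define I where "I = {1..n} - C"
  have fC: "finite C" using C finite_subset by blast
  have fI: "finite I" unfolding I_def by auto
  have bij: "bij_betw (nb I C) (PP n C) (\<Pi>\<^sub>E x\<in>I. Pow C)" using bij_nb[OF C] unfolding I_def by auto
  have eq: "{E\<in>PP n C. cA n C E} = {E\<in>PP n C. (\<forall>v\<in>I. nb I C E v \<noteq> C)}"
  proof (rule Collect_cong)
    fix E :: "nat set set"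
    have sw: "\<And>a b. {a,b} \<in> E \<longleftrightarrow> {b,a} \<in> E" by (simp add: insert_commute)
    have pv: "(\<exists>u\<in>C. {u,v}\<notin>E) \<longleftrightarrow> nb I C E v \<noteq> C" if v: "v \<in> I" for v
    proof -
      have "nb I C E v = {y\<in>C. {v,y}\<in>E}" using v by (simp add: nb_def)
      moreover have "{y\<in>C. {v,y}\<in>E} \<noteq> C \<longleftrightarrow> (\<exists>u\<in>C. {v,u}\<notin>E)" by blast
      moreover have "(\<exists>u\<in>C. {v,u}\<notin>E) \<longleftrightarrow> (\<exists>u\<in>C. {u,v}\<notin>E)" by (simp add: insert_commute)
      ultimately show ?thesis by simp
    qed
    show "(E \<in> PP n C \<and> cA n C E) \<longleftrightarrow> (E \<in> PP n C \<and> (\<forall>v\<in>I. nb I C E v \<noteq> C))"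
      unfolding cA_def I_def[symmetric] by (intro conj_cong refl ball_cong pv)
  qed
  have eq2: "{f \<in> (\<Pi>\<^sub>E x\<in>I. Pow C). \<forall>v\<in>I. f v \<noteq> C} = (\<Pi>\<^sub>E x\<in>I. Pow C - {C})"
    by (simp only: set_eq_iff mem_Collect_eq PiE_iff) blast
  have cI: "card I = n - card C" using C fC unfolding I_def by (simp add: card_Diff_subset)
  have "card {E\<in>PP n C. cA n C E} = card (\<Pi>\<^sub>E x\<in>I. Pow C - {C})"
    using card_sub_bij[OF bij, of "\<lambda>f. \<forall>v\<in>I. f v \<noteq> C"] eq eq2 by simp
  also have "\<dots> = (2 ^ card C - 1) ^ (n - card C)"
    using fC fI cI by (simp add: card_PiE card_Pow)
  finally show ?thesis .
qed

lemma cardA2: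
  assumes C: "C \<subseteq> {1..n}"
  shows "card {E\<in>PP n C. cB n C E} = (2 ^ (n - card C) - 1) ^ card C"
proof -
  define I where "I = {1..n} - C"
  have fC: "finite C" using C finite_subset by blast
  have fI: "finite I" unfolding I_def by auto
  have bij: "bij_betw (nb C I) (PP n C) (\<Pi>\<^sub>E x\<in>C. Pow I)" using bij_nb[OF C] unfolding I_def by auto
  have eq: "{E\<in>PP n C. cB n C E} = {E\<in>PP n C. (\<forall>u\<in>C. nb C I E u \<noteq> {})}"
  proof (rule Collect_cong)
    fix E :: "nat set set"
    have pv: "(\<exists>v\<in>I. {u,v}\<in>E) \<longleftrightarrow> nb C I E u \<noteq> {}" if u: "u \<in> C" for u
    proof -
      have "nb C I E u = {y\<in>I. {u,y}\<in>E}" using u by (simp add: nb_def)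
      thus ?thesis by blast
    qed
    show "(E \<in> PP n C \<and> cB n C E) \<longleftrightarrow> (E \<in> PP n C \<and> (\<forall>u\<in>C. nb C I E u \<noteq> {}))"
      unfolding cB_def I_def[symmetric] by (intro conj_cong refl ball_cong pv)
  qed
  have eq2: "{f \<in> (\<Pi>\<^sub>E x\<in>C. Pow I). \<forall>u\<in>C. f u \<noteq> {}} = (\<Pi>\<^sub>E x\<in>C. Pow I - {{}})"
    by (simp only: set_eq_iff mem_Collect_eq PiE_iff) blast
  have cI: "card I = n - card C" using C fC unfolding I_def by (simp add: card_Diff_subset)
  have "card {E\<in>PP n C. cB n C E} = card (\<Pi>\<^sub>E x\<in>C. Pow I - {{}})"
    using card_sub_bij[OF bij, of "\<lambda>f. \<forall>u\<in>C. f u \<noteq> {}"] eq eq2 by simp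
  also have "\<dots> = (2 ^ (n - card C) - 1) ^ card C"
    using fC fI cI by (simp add: card_PiE card_Pow)
  finally show ?thesis .
qed

lemma bad1:
  assumes C: "C \<subseteq> {1..n}"
  shows "card {E\<in>PP n C. cA n C E \<and> \<not> cB n C E} \<le> card C * (2 ^ (card C - 1)) ^ (n - card C)"
proof -
  define I where "I = {1..n} - C"
  have fC: "finite C" using C finite_subset by blast
  have fI: "finite I" unfolding I_def by auto
  have bij: "bij_betw (nb I C) (PP n C) (\<Pi>\<^sub>E x\<in>I. Pow C)" using bij_nb[OF C] unfolding I_def by auto
  have cI: "card I = n - card C" using C fC unfolding I_def by (simp add: card_Diff_subset)
  have sub: "{E\<in>PP n C. cA n C E \<and> \<not> cB n C E} \<subseteq> (\<Union>u\<in>C. {E\<in>PP n C. (\<forall>v\<in>I. u \<notin> nb I C E v)})"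
  proof
    fix E assume E: "E \<in> {E\<in>PP n C. cA n C E \<and> \<not> cB n C E}"
    have sw: "\<And>a b. {a,b} \<in> E \<longleftrightarrow> {b,a} \<in> E" by (simp add: insert_commute)
    from E obtain u where u: "u \<in> C" "\<forall>v\<in>I. {u,v} \<notin> E" unfolding cB_def I_def[symmetric] by blast
    have "\<forall>v\<in>I. u \<notin> nb I C E v"
    proof
      fix v assume v: "v \<in> I"
      have "nb I C E v = {y\<in>C. {v,y}\<in>E}" using v by (simp add: nb_def)
      moreover have "{v,u} \<notin> E" using u v by (metis insert_commute)
      ultimately show "u \<notin> nb I C E v" by simp
    qed
    thus "E \<in> (\<Union>u\<in>C. {E\<in>PP n C. (\<forall>v\<in>I. u \<notin> nb I C E v)})" using u E by blast
  qed
  have each: "card {E\<in>PP n C. (\<forall>v\<in>I. u \<notin> nb I C E v)} = (2 ^ (card C - 1)) ^ (n - card C)"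
    if u: "u \<in> C" for u
  proof -
    have eq2: "{f \<in> (\<Pi>\<^sub>E x\<in>I. Pow C). \<forall>v\<in>I. u \<notin> f v} = (\<Pi>\<^sub>E x\<in>I. Pow (C - {u}))"
      using u by (simp only: set_eq_iff mem_Collect_eq PiE_iff) blast
    have "card {E\<in>PP n C. (\<forall>v\<in>I. u \<notin> nb I C E v)} = card (\<Pi>\<^sub>E x\<in>I. Pow (C - {u}))"
      using card_sub_bij[OF bij, of "\<lambda>f. \<forall>v\<in>I. u \<notin> f v"] eq2 by simp
    also have "\<dots> = (2 ^ (card C - 1)) ^ (n - card C)"
      using fC fI cI u by (simp add: card_PiE card_Pow card_Diff_singleton)
    finally show ?thesis .
  qed
  have "card {E\<in>PP n C. cA n C E \<and> \<not> cB n C E} \<le> card (\<Union>u\<in>C. {E\<in>PP n C. (\<forall>v\<in>I. u \<notin> nb I C E v)})"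
    by (rule card_mono[OF _ sub]) (use fC finite_PP in auto)
  also have "\<dots> \<le> (\<Sum>u\<in>C. card {E\<in>PP n C. (\<forall>v\<in>I. u \<notin> nb I C E v)})"
    by (rule card_UN_le[OF fC])
  also have "\<dots> = card C * (2 ^ (card C - 1)) ^ (n - card C)"
    using each by simp
  finally show ?thesis .
qed

lemma card_contain: "finite I \<Longrightarrow> v \<in> I \<Longrightarrow> card {Z\<in>Pow I. v \<in> Z} \<le> 2 ^ (card I - 1)"
proof -
  assume fI: "finite I" and v: "v \<in> I"
  have "{Z\<in>Pow I. v \<in> Z} \<subseteq> insert v ` Pow (I - {v})"
  proof
    fix Z assume "Z \<in> {Z\<in>Pow I. v \<in> Z}"
    hence Z: "Z \<subseteq> I" "v \<in> Z" by auto
    hence "Z = insert v (Z - {v})" "Z - {v} \<in> Pow (I - {v})" by auto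
    thus "Z \<in> insert v ` Pow (I - {v})" by (metis image_eqI)
  qed
  hence "card {Z\<in>Pow I. v \<in> Z} \<le> card (insert v ` Pow (I - {v}))"
    by (intro card_mono) (use fI in auto)
  also have "\<dots> \<le> card (Pow (I - {v}))" by (rule card_image_le) (use fI in auto)
  also have "\<dots> = 2 ^ (card I - 1)" using fI v by (simp add: card_Pow)
  finally show ?thesis .
qed

lemma bad2:
  assumes C: "C \<subseteq> {1..n}"
  shows "card {E\<in>PP n C. cB n C E \<and> \<not> cA n C E} \<le> (n - card C) * (2 ^ (n - card C - 1)) ^ card C"
proof -
  define I where "I = {1..n} - C"
  have fC: "finite C" using C finite_subset by blast
  have fI: "finite I" unfolding I_def by auto
  have bij: "bij_betw (nb C I) (PP n C) (\<Pi>\<^sub>E x\<in>C. Pow I)" using bij_nb[OF C] unfolding I_def by auto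
  have cI: "card I = n - card C" using C fC unfolding I_def by (simp add: card_Diff_subset)
  have sub: "{E\<in>PP n C. cB n C E \<and> \<not> cA n C E} \<subseteq> (\<Union>v\<in>I. {E\<in>PP n C. (\<forall>u\<in>C. v \<in> nb C I E u)})"
    unfolding cA_def nb_def I_def[symmetric] by auto
  have each: "card {E\<in>PP n C. (\<forall>u\<in>C. v \<in> nb C I E u)} \<le> (2 ^ (n - card C - 1)) ^ card C"
    if v: "v \<in> I" for v
  proof -
    have eq2: "{f \<in> (\<Pi>\<^sub>E x\<in>C. Pow I). \<forall>u\<in>C. v \<in> f u} = (\<Pi>\<^sub>E x\<in>C. {Z\<in>Pow I. v \<in> Z})"
      by (simp only: set_eq_iff mem_Collect_eq PiE_iff) blast
    have "card {E\<in>PP n C. (\<forall>u\<in>C. v \<in> nb C I E u)} = card (\<Pi>\<^sub>E x\<in>C. {Z\<in>Pow I. v \<in> Z})"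
      using card_sub_bij[OF bij, of "\<lambda>f. \<forall>u\<in>C. v \<in> f u"] eq2 by simp
    also have "\<dots> = (\<Prod>x\<in>C. card {Z\<in>Pow I. v \<in> Z})" using fC by (simp add: card_PiE)
    also have "\<dots> \<le> (\<Prod>x\<in>C. 2 ^ (n - card C - 1))"
      by (rule prod_mono) (use card_contain[OF fI v] cI in auto)
    also have "\<dots> = (2 ^ (n - card C - 1)) ^ card C" by simp
    finally show ?thesis .
  qed
  have "card {E\<in>PP n C. cB n C E \<and> \<not> cA n C E} \<le> card (\<Union>v\<in>I. {E\<in>PP n C. (\<forall>u\<in>C. v \<in> nb C I E u)})"
    by (rule card_mono[OF _ sub]) (use fI finite_PP in auto)
  also have "\<dots> \<le> (\<Sum>v\<in>I. card {E\<in>PP n C. (\<forall>u\<in>C. v \<in> nb C I E u)})"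
    by (rule card_UN_le[OF fI])
  also have "\<dots> \<le> (\<Sum>v\<in>I. (2 ^ (n - card C - 1)) ^ card C)"
    by (rule sum_mono) (use each in auto)
  also have "\<dots> = (n - card C) * (2 ^ (n - card C - 1)) ^ card C"
    using cI by simp
  finally show ?thesis .
qed



definition AA :: "nat \<Rightarrow> nat set \<Rightarrow> nat set set set" where
  "AA n C = (if card C \<le> n div 2 then {E\<in>PP n C. cA n C E} else {E\<in>PP n C. cB n C E})"

definition TT :: "nat \<Rightarrow> nat \<Rightarrow> nat" where
  "TT n c = (if c \<le> n div 2 then (2 ^ c - 1) ^ (n - c) else (2 ^ (n - c) - 1) ^ c)"

lemma card_AA: "C \<subseteq> {1..n} \<Longrightarrow> card (AA n C) = TT n (card C)"
  unfolding AA_def TT_def using cardA1 cardA2 by auto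

lemma GG_sub_AA: "GG n C \<subseteq> AA n C"
  unfolding AA_def GG_def by auto

lemma finite_AA: "finite (AA n C)"
  unfolding AA_def using finite_PP by auto

lemma key_ineq:
  assumes a: "2 \<le> a" and b: "real n / 2 \<le> real b" and an: "a \<le> n"
  shows "real (a * (2 ^ (a - 1)) ^ b) \<le> real n * (2/3) powr (real n / 2) * real ((2 ^ a - 1) ^ b)"
proof -
  have e: "(2::real) ^ a = 2 * 2 ^ (a - 1)"
    using a by (metis Suc_diff_1 le_trans one_le_numeral not_one_le_zero power_Suc gr0I)
  have "(2::real) ^ 1 \<le> 2 ^ (a - 1)" by (rule power_increasing) (use a in auto)
  hence p: "(2::real) ^ (a - 1) \<le> (2/3) * (2 ^ a - 1)" using e by simp
  have "((2::real) ^ (a - 1)) ^ b \<le> ((2/3) * (2 ^ a - 1)) ^ b"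
    by (rule power_mono[OF p]) simp
  also have "\<dots> = (2/3) ^ b * (2 ^ a - 1) ^ b" by (simp only: power_mult_distrib)
  also have "(2/3::real) ^ b = (2/3) powr (real b)" by (simp add: powr_realpow)
  also have "\<dots> \<le> (2/3) powr (real n / 2)" by (rule powr_mono') (use b in auto)
  finally have q: "((2::real) ^ (a - 1)) ^ b \<le> (2/3) powr (real n / 2) * (2 ^ a - 1) ^ b"
    by (simp add: mult_right_mono)
  have r: "real ((2 ^ a - 1) ^ b) = ((2::real) ^ a - 1) ^ b"
  proof -
    have "(1::nat) \<le> 2 ^ a" by simp
    thus ?thesis by (simp add: of_nat_diff)
  qed
  have "real (a * (2 ^ (a - 1)) ^ b) = real a * ((2::real) ^ (a - 1)) ^ b" by simp
  also have "\<dots> \<le> real n * ((2/3) powr (real n / 2) * (2 ^ a - 1) ^ b)"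
    by (rule mult_mono) (use q an in auto)
  finally show ?thesis using r by (simp add: mult.assoc)
qed

lemma bad_real:
  assumes C: "C \<in> CC n"
  shows "real (card (AA n C)) - real (card (GG n C)) \<le> real n * (2/3) powr (real n / 2) * real (card (AA n C))"
proof -
  have Cs: "C \<subseteq> {1..n}" and c2: "2 \<le> card C" and cn: "card C \<le> n - 2" using C unfolding CC_def by auto
  have diff: "real (card (AA n C)) - real (card (GG n C)) = real (card (AA n C - GG n C))"
    using GG_sub_AA[of n C] finite_GG[of n C] card_mono[OF finite_AA GG_sub_AA[of n C]]
    by (simp add: card_Diff_subset of_nat_diff)
  show ?thesis
  proof (cases "card C \<le> n div 2")
    case True
    have "AA n C - GG n C \<subseteq> {E\<in>PP n C. cA n C E \<and> \<not> cB n C E}"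
      using True unfolding AA_def GG_def by auto
    hence "card (AA n C - GG n C) \<le> card {E\<in>PP n C. cA n C E \<and> \<not> cB n C E}"
      by (rule card_mono[rotated]) (use finite_PP in auto)
    also have "\<dots> \<le> card C * (2 ^ (card C - 1)) ^ (n - card C)" by (rule bad1[OF Cs])
    finally have "real (card (AA n C - GG n C)) \<le> real (card C * (2 ^ (card C - 1)) ^ (n - card C))"
      by linarith
    also have "\<dots> \<le> real n * (2/3) powr (real n / 2) * real ((2 ^ card C - 1) ^ (n - card C))"
      by (rule key_ineq) (use c2 cn True in auto)
    also have "(2 ^ card C - 1) ^ (n - card C) = card (AA n C)"
      using card_AA[OF Cs] True unfolding TT_def by simp
    finally show ?thesis using diff by simp
  next
    case False
    have "AA n C - GG n C \<subseteq> {E\<in>PP n C. cB n C E \<and> \<not> cA n C E}"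
      using False unfolding AA_def GG_def by auto
    hence "card (AA n C - GG n C) \<le> card {E\<in>PP n C. cB n C E \<and> \<not> cA n C E}"
      by (rule card_mono[rotated]) (use finite_PP in auto)
    also have "\<dots> \<le> (n - card C) * (2 ^ (n - card C - 1)) ^ card C" by (rule bad2[OF Cs])
    finally have "real (card (AA n C - GG n C)) \<le> real ((n - card C) * (2 ^ (n - card C - 1)) ^ card C)"
      by linarith
    also have "\<dots> \<le> real n * (2/3) powr (real n / 2) * real ((2 ^ (n - card C) - 1) ^ card C)"
      by (rule key_ineq) (use c2 cn False in auto)
    also have "(2 ^ (n - card C) - 1) ^ card C = card (AA n C)"
      using card_AA[OF Cs] False unfolding TT_def by simp
    finally show ?thesis using diff by simp
  qed
qed

lemma S_eq:
  assumes n: "4 \<le> n"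
  shows "S n = (\<Sum>c\<in>{2..n-2}. (n choose c) * TT n c)"
proof -
  have U: "{2..n-2} = {2..n div 2} \<union> {n div 2 + 1..n-2}" using n by auto
  have "(\<Sum>c\<in>{2..n-2}. (n choose c) * TT n c)
      = (\<Sum>c\<in>{2..n div 2}. (n choose c) * TT n c) + (\<Sum>c\<in>{n div 2 + 1..n-2}. (n choose c) * TT n c)"
    unfolding U by (rule sum.union_disjoint) auto
  also have "(\<Sum>c\<in>{2..n div 2}. (n choose c) * TT n c) = (\<Sum>c = 2..n div 2. (n choose c) * (2 ^ c - 1) ^ (n - c))"
    by (rule sum.cong) (auto simp: TT_def)
  also have "(\<Sum>c\<in>{n div 2 + 1..n-2}. (n choose c) * TT n c) = (\<Sum>c = n div 2 + 1..n - 2. (n choose c) * (2 ^ (n - c) - 1) ^ c)"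
    by (rule sum.cong) (auto simp: TT_def)
  finally show ?thesis unfolding S_def by simp
qed

lemma CC_union: "CC n = (\<Union>c\<in>{2..n-2}. {C. C \<subseteq> {1..n} \<and> card C = c})"
  unfolding CC_def by auto

lemma S_sum:
  assumes n: "4 \<le> n"
  shows "S n = (\<Sum>C\<in>CC n. card (AA n C))"
proof -
  have "(\<Sum>C\<in>CC n. card (AA n C)) = (\<Sum>c\<in>{2..n-2}. \<Sum>C\<in>{C. C \<subseteq> {1..n} \<and> card C = c}. card (AA n C))"
    unfolding CC_union
    by (rule sum.UNION_disjoint) auto
  also have "\<dots> = (\<Sum>c\<in>{2..n-2}. (n choose c) * TT n c)"
  proof (rule sum.cong[OF refl])
    fix c
    have "(\<Sum>C\<in>{C. C \<subseteq> {1..n} \<and> card C = c}. card (AA n C)) = (\<Sum>C\<in>{C. C \<subseteq> {1..n} \<and> card C = c}. TT n c)"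
      by (rule sum.cong) (auto simp: card_AA)
    also have "\<dots> = card {C. C \<subseteq> {1..n} \<and> card C = c} * TT n c" by simp
    also have "card {C. C \<subseteq> {1..n} \<and> card C = c} = n choose c" using n_subsets[of "{1..n}" c] by simp
    finally show "(\<Sum>C\<in>{C. C \<subseteq> {1..n} \<and> card C = c}. card (AA n C)) = (n choose c) * TT n c" .
  qed
  finally show ?thesis using S_eq[OF n] by simp
qed

lemma finite_CC: "finite (CC n)"
  unfolding CC_def by (rule finite_subset[where B="Pow {1..n}"]) auto

lemma H_sum:
  assumes n: "1 \<le> n"
  shows "H n = (\<Sum>C\<in>CC n. card (GG n C))"
  unfolding H_def Hset_eq[OF n]
  by (rule card_UN_disjoint[OF finite_CC]) (use finite_GG GG_disj in blast)+

lemma asym: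
  assumes n: "1296 \<le> n"
  shows "2 * (real n * (2/3) powr (real n / 2)) \<le> (3/2) powr (- real n / 3)"
    and "(3/2::real) powr (- real n / 3) \<le> 1"
proof -
  define x where "x = real n"
  define L where "L = ln (3/2::real)"
  have x: "1296 \<le> x" using n unfolding x_def by simp
  have l23: "ln (2/3::real) = - L" unfolding L_def by (simp add: ln_div)
  have "ln (2/3::real) \<le> 2/3 - 1" by (rule ln_le_minus_one) simp
  hence L: "1/3 \<le> L" using l23 by simp
  have p1: "(2/3::real) powr (x / 2) = exp (- (x * L / 2))" by (simp add: powr_def l23)
  have p2: "(3/2::real) powr (- x / 3) = exp (- (x * L / 3))" by (simp add: powr_def L_def)
  define y where "y = x * L / 6"
  have y: "x / 18 \<le> y" unfolding y_def using L x by (simp add: field_simps)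
  have y0: "0 \<le> y" using y x by simp
  have "1 + y + y\<^sup>2 / 2 \<le> exp y" by (rule exp_lower_Taylor_quadratic[OF y0])
  moreover have "(x/18)\<^sup>2 \<le> y\<^sup>2" by (rule power_mono[OF y]) (use x in simp)
  moreover have "2 * x \<le> (x/18)\<^sup>2 / 2"
  proof -
    have "1296 * x \<le> x * x" using x by (intro mult_right_mono) auto
    thus ?thesis by (simp add: power2_eq_square field_simps)
  qed
  ultimately have ey: "2 * x \<le> exp y" using y0 by linarith
  have split: "exp (- (x * L / 3)) = exp y * exp (- (x * L / 2))"
    unfolding y_def by (simp add: exp_add[symmetric] field_simps)
  have "2 * x * exp (- (x * L / 2)) \<le> exp y * exp (- (x * L / 2))"
    by (rule mult_right_mono[OF ey]) simp
  thus "2 * (real n * (2/3) powr (real n / 2)) \<le> (3/2) powr (- real n / 3)"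
    unfolding x_def[symmetric] p1 p2 split by simp
  have "0 \<le> x * L / 3" using x L by simp
  thus "(3/2::real) powr (- real n / 3) \<le> 1" unfolding x_def[symmetric] p2 by simp
qed

theorem lemma8p9:
  shows "\<exists>N::nat. \<forall>n\<ge>N. H n \<le> S n \<and>
           real (S n) \<le> (1 + (3/2) powr (- real n / 3)) * real (H n)"
proof (intro exI allI impI)
  fix n :: nat assume n: "1296 \<le> n"
  have Sn: "S n = (\<Sum>C\<in>CC n. card (AA n C))" by (rule S_sum) (use n in auto)
  have Hn: "H n = (\<Sum>C\<in>CC n. card (GG n C))" by (rule H_sum) (use n in auto)
  have le: "\<And>C. card (GG n C) \<le> card (AA n C)" by (rule card_mono[OF finite_AA GG_sub_AA])
  show "H n \<le> S n \<and> real (S n) \<le> (1 + (3/2) powr (- real n / 3)) * real (H n)"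
  proof
    show "H n \<le> S n" unfolding Sn Hn by (rule sum_mono) (rule le)
    define d where "d = real n * (2/3) powr (real n / 2)"
    define e where "e = (3/2::real) powr (- real n / 3)"
    have de: "2 * d \<le> e" "e \<le> 1" using asym[OF n] unfolding d_def e_def by auto
    have d0: "0 \<le> d" unfolding d_def by simp
    have "real (S n) - real (H n) = (\<Sum>C\<in>CC n. real (card (AA n C)) - real (card (GG n C)))"
      unfolding Sn Hn by (simp add: sum_subtractf)
    also have "\<dots> \<le> (\<Sum>C\<in>CC n. d * real (card (AA n C)))"
      by (rule sum_mono) (use bad_real in \<open>simp add: d_def\<close>)
    also have "\<dots> = d * real (S n)" unfolding Sn by (simp add: sum_distrib_left)
    finally have hs: "(1 - d) * real (S n) \<le> real (H n)" by (simp add: algebra_simps)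
    have "e * d \<le> 1 * d" by (rule mult_right_mono) (use de d0 in auto)
    hence h1: "1 \<le> (1 + e) * (1 - d)" using de by (simp add: algebra_simps)
    have "real (S n) = 1 * real (S n)" by simp
    also have "\<dots> \<le> (1 + e) * (1 - d) * real (S n)" by (rule mult_right_mono[OF h1]) simp
    also have "\<dots> = (1 + e) * ((1 - d) * real (S n))" by simp
    also have "\<dots> \<le> (1 + e) * real (H n)" by (rule mult_left_mono[OF hs]) (use de d0 in \<open>simp add: e_def\<close>)
    finally show "real (S n) \<le> (1 + (3/2) powr (- real n / 3)) * real (H n)" unfolding e_def .
  qed
qed

end
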